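(* Let $d\ge1$ and let $D_d=\bigl(\binom{d-j}{d-i}\bigr)_{1\le i,j\le d}$, with the convention $\binom{r}{s}=0$ if $s<0$ or $s>r$ (so $D_d$ is lower unitriangular). For any $0\le m\le d-1$, the $(d-m)\times(d-m)$ matrix obtained from $D_d$ by deleting its last $m$ columns and any $m$ consecutive rows has determinant $1$.
   Context: Standard binomial coefficients; the only convention is $\binom{r}{s}=0$ for $s<0$ or $s>r$ with $r\ge0$. *)

theory Defs
  imports "Jordan_Normal_Form.Determinant"
begin

text \<open>The d x d matrix D_d with (1-based) entries binom(d-j, d-i), stored 0-based:
  entry (i,j) with 0 \<le> i,j < d corresponds to paper indices (i+1, j+1).
  Natural-number choose gives 0 when d-i > d-j, matching the convention.\<close>
definition D_mat :: "nat \<Rightarrow> int mat" where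
  "D_mat d = mat d d (\<lambda>(i, j). int ((d - (j + 1)) choose (d - (i + 1))))"

text \<open>Delete the last m columns and the m consecutive rows with (0-based) indices
  k, ..., k+m-1 (paper rows k+1..k+m). Remaining row i' maps to original row
  i' if i' < k and to i'+m otherwise.\<close>
definition del_minor :: "nat \<Rightarrow> nat \<Rightarrow> nat \<Rightarrow> int mat" where
  "del_minor d m k = mat (d - m) (d - m)
     (\<lambda>(i, j). D_mat d $$ (if i < k then i else i + m, j))"

end

theory Submission
  imports Defs
begin

lemma del_minor_carrier: "del_minor d m k \<in> carrier_mat (d - m) (d - m)"
  unfolding del_minor_def by auto

lemma del_minor_dim[simp]: "dim_row (del_minor d m k) = d - m" "dim_col (del_minor d m k) = d - m"
  unfolding del_minor_def by auto

lemma del_minor_index: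
  "i < d - m \<Longrightarrow> j < d - m \<Longrightarrow>
   del_minor d m k $$ (i, j) = int ((d - (j + 1)) choose (d - ((if i < k then i else i + m) + 1)))"
  unfolding del_minor_def D_mat_def by auto

lemma sum_bidiag:
  assumes "j < n"
  shows "(\<Sum>l=0..<n. f l * (if l = j then 1 else if l = Suc j then -1 else (0::int)))
         = f j - (if Suc j < n then f (Suc j) else 0)"
proof -
  have "(\<Sum>l=0..<n. f l * (if l = j then 1 else if l = Suc j then -1 else (0::int)))
      = (\<Sum>l=0..<n. (if l = j then f l else 0) - (if l = Suc j then f l else 0))"
    by (rule sum.cong) auto
  also have "\<dots> = f j - (if Suc j < n then f (Suc j) else 0)"
    using assms by (simp add: sum_subtractf)
  finally show ?thesis .
qed

lemma laplace_unit_row: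
  assumes A: "(A :: int mat) \<in> carrier_mat n n" and i: "i < n" and j0: "j0 < n"
    and u: "\<And>j. j < n \<Longrightarrow> A $$ (i, j) = (if j = j0 then 1 else 0)"
  shows "det A = (-1)^(i+j0) * det (mat_delete A i j0)"
proof -
  have "det A = (\<Sum>j<n. A $$ (i,j) * cofactor A i j)" by (rule laplace_expansion_row[OF A i])
  also have "\<dots> = (\<Sum>j<n. if j = j0 then cofactor A i j else 0)"
    by (rule sum.cong) (auto simp: u)
  also have "\<dots> = cofactor A i j0" using j0 by simp
  finally show ?thesis unfolding cofactor_def .
qed

lemma step_kpos:
  assumes k: "0 < k" and km: "k + m \<le> Suc d" and m: "m < Suc d"
  shows "det (del_minor (Suc d) m k) = det (del_minor d m (k - 1))"
proof -
  let ?M = "del_minor (Suc d) m k"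
  let ?n = "Suc d - m"
  have C: "?M \<in> carrier_mat ?n ?n" by (rule del_minor_carrier)
  have u: "?M $$ (0, j) = (if j = 0 then 1 else 0)" if "j < ?n" for j
    using that k m by (auto simp: del_minor_index)
  have "det ?M = det (mat_delete ?M 0 0)"
    using laplace_unit_row[OF C _ _ u] m by simp
  also have "mat_delete ?M 0 0 = del_minor d m (k - 1)"
    by (rule eq_matI) (use k m in \<open>auto simp: mat_delete_def del_minor_def D_mat_def\<close>)
  finally show ?thesis .
qed

definition Emat :: "nat \<Rightarrow> int mat" where
  "Emat n = mat n n (\<lambda>(l, j). if l = j then 1 else if l = Suc j then -1 else 0)"

lemma det_Emat: "det (Emat n) = 1"
proof -
  have "det (Emat n) = prod_list (diag_mat (Emat n))"
    by (rule det_lower_triangular[of n]) (auto simp: Emat_def)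
  also have "\<dots> = 1" by (simp add: prod_list_diag_prod Emat_def)
  finally show ?thesis .
qed

lemma ME_index:
  assumes "M \<in> carrier_mat n n" "i < n" "j < n"
  shows "(M * Emat n) $$ (i, j) = M $$ (i, j) - (if Suc j < n then M $$ (i, Suc j) else 0)"
proof -
  have "(M * Emat n) $$ (i, j) = (\<Sum>l=0..<n. M $$ (i, l) * (if l = j then 1 else if l = Suc j then -1 else (0::int)))"
    using assms by (simp add: scalar_prod_def Emat_def)
  also have "\<dots> = M $$ (i, j) - (if Suc j < n then M $$ (i, Suc j) else 0)"
    by (rule sum_bidiag[OF assms(3)])
  finally show ?thesis .
qed

lemma step_kzero:
  assumes m: "m < Suc d"
  shows "det (del_minor (Suc d) m 0) = det (del_minor d m 0)"
proof -
  let ?M = "del_minor (Suc d) m 0"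
  let ?n = "Suc d - m"
  let ?A = "?M * Emat ?n"
  have C: "?M \<in> carrier_mat ?n ?n" by (rule del_minor_carrier)
  have CE: "Emat ?n \<in> carrier_mat ?n ?n" by (simp add: Emat_def)
  have CA: "?A \<in> carrier_mat ?n ?n" using C CE by auto
  have dA: "dim_row ?A = ?n" "dim_col ?A = ?n" using CA by auto
  have "det ?A = det ?M * det (Emat ?n)" by (rule det_mult[OF C CE])
  hence eq1: "det ?M = det ?A" by (simp add: det_Emat)
  have u: "?A $$ (d - m, j) = (if j = d - m then 1 else 0)" if "j < ?n" for j
    using that m by (auto simp: ME_index[OF C] del_minor_index)
  have "det ?A = (-1)^(d - m + (d - m)) * det (mat_delete ?A (d - m) (d - m))"
    by (rule laplace_unit_row[OF CA _ _ u]) (use m in auto)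
  also have "(-1::int)^(d - m + (d - m)) = 1" by simp
  also have "mat_delete ?A (d - m) (d - m) = del_minor d m 0"
  proof (rule eq_matI)
    fix i j assume i: "i < dim_row (del_minor d m 0)" and j: "j < dim_col (del_minor d m 0)"
    hence i': "i < d - m" and j': "j < d - m" by (auto simp: del_minor_def)
    have "mat_delete ?A (d - m) (d - m) $$ (i, j) = ?A $$ (i, j)"
      using i' j' m by (simp only: mat_delete_def dA index_mat) simp
    also have "\<dots> = int (Suc d - (j + 1) choose (Suc d - (i + m + 1)))
                    - int (Suc d - (Suc j + 1) choose (Suc d - (i + m + 1)))"
      using i' j' m by (simp add: ME_index[OF C] del_minor_index)
    also have "\<dots> = int ((d - (j + 1)) choose (d - (i + m + 1)))"
    proof -
      obtain a where a: "d - j = Suc a" using j' by (cases "d - j") auto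
      obtain b where b: "d - (i + m) = Suc b" using i' by (cases "d - (i + m)") auto
      have e1: "Suc d - (j + 1) = Suc a" "Suc d - (Suc j + 1) = a" "d - (j+1) = a" using a by auto
      have e2: "Suc d - (i + m + 1) = Suc b" "d - (i + m + 1) = b" using b by auto
      show ?thesis unfolding e1 e2 by simp
    qed
    also have "\<dots> = del_minor d m 0 $$ (i, j)" using i' j' by (simp add: del_minor_index)
    finally show "mat_delete ?A (d - m) (d - m) $$ (i, j) = del_minor d m 0 $$ (i, j)" .
  qed (use m in \<open>auto simp: Emat_def\<close>)
  finally show ?thesis using eq1 by simp
qed

lemma main: "k + m \<le> d \<Longrightarrow> det (del_minor d m k) = 1"
proof (induction d arbitrary: k)
  case 0
  then show ?case using del_minor_carrier[of 0 m k] by simp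
next
  case (Suc d)
  show ?case
  proof (cases "m = Suc d")
    case True
    then show ?thesis using del_minor_carrier[of "Suc d" m k] by simp
  next
    case False
    hence m: "m < Suc d" using Suc.prems by auto
    show ?thesis
    proof (cases "k = 0")
      case True
      then show ?thesis using step_kzero[OF m] Suc.IH[of 0] m by simp
    next
      case False
      then show ?thesis using step_kpos[OF _ Suc.prems m] Suc.IH[of "k - 1"] Suc.prems by simp
    qed
  qed
qed

theorem lemma5p11:
  fixes d m k :: nat
  assumes "d \<ge> 1" and "m \<le> d - 1" and "k + m \<le> d"
  shows "det (del_minor d m k) = 1"
  using main[OF assms(3)] .

end
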